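(* Let $s\in\mathbb N$, $\mathbf n<2^{2m_s+1}\mathbf 1$, and let $\Delta^{(m_s)}$ be a dyadic cube of rank $m_s$ with $\Delta^{(m_s)}\subset\widetilde F_{s-1}$. Then, for $\tau=\tau_F$, $$\int_{F_s\cap\Delta^{(m_s)}}W_{\mathbf n}\,d\mu=2^{-s}\int_{\Delta^{(m_s)}}W_{\mathbf n}\,d\tau=2^{-s}\widehat\tau_{\mathbf n}(\Delta^{(m_s)}).$$ The same holds when $F_s$, $\widetilde F_{s-1}$ and $\tau$ are replaced by $F^{\boldsymbol\pi}_s$, $\widetilde F^{\boldsymbol\pi}_{s-1}$ and $\tau^{\boldsymbol\pi}=\tau_{F^{\boldsymbol\pi}}$, for any sequence $\boldsymbol\pi=(\boldsymbol\pi_s)$ of permutations $\boldsymbol\pi_s$ of $\{0,\dots,2^{m_s}-1\}^d$.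
   Context: Fix $d\ge2$. $\mathbb G$ is the dyadic group: sequences $g=(g_k)_{k\ge0}$, $g_k\in\{0,1\}$, coordinatewise addition mod 2, product topology; $\mathbb G^d$ its $d$-th power, $\mu$ its normalized Haar measure. For $n\in\mathbb N_0$, $n=\sum_kn_k2^k$, $n_k\in\{0,1\}$. Dyadic interval of rank $k$: $\Delta^{(k)}_m=\{g: g_t=m_{k-1-t},\ 0\le t<k\}$; dyadic cube $\Delta^{(k)}_{\mathbf m}=\prod_l\Delta^{(k)}_{m^l}$. Vector order coordinatewise, $\mathbf 1=(1,\dots,1)$. Walsh functions $W_n(g)=\prod_k(-1)^{g_kn_k}$, $W_{\mathbf n}(\mathbf g)=\prod_lW_{n^l}(g^l)$; $W^{(k)}_{\mathbf n\mathbf m}$ is the constant value of $W_{\mathbf n}$ on $\Delta^{(k)}_{\mathbf m}$ ($\mathbf n,\mathbf m<2^k\mathbf 1$); $R_{k\mathbf 1}:=W_{2^k\mathbf 1}$. Quasimeasure: $\tau$ on dyadic cubes with $\tau(\Delta^{(k)}_{\mathbf m})=\sum_{\boldsymbol\sigma\in\{0,1\}^d}\tau(\Delta^{(k+1)}_{2\mathbf m+\boldsymbol\sigma})$; for a dyadic cube $\Delta$ of rank $r$, $\widehat\tau_{\mathbf n}(\Delta)=\int_\Delta W_{\mathbf n}d\tau:=\sum_{\Delta^{(k)}_{\mathbf m}\subset\Delta}W^{(k)}_{\mathbf n\mathbf m}\tau(\Delta^{(k)}_{\mathbf m})$ for any $k\ge r$ with $\mathbf n<2^k\mathbf 1$.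 For nonempty closed $E$, $\tau_E$ is the unique nonnegative quasimeasure with $\tau_E(\mathbb G^d)=1$, $\tau_E(\Delta)=0$ iff $\Delta\cap E=\emptyset$, splitting the value of a cube meeting $E$ equally among its $2^d$ children that meet $E$. Let $m_1=0$, $m_{s+1}=2(2m_s+1)$. $F_s=\bigcup_{\mathbf m,\mathbf m'<2^{m_s}\mathbf 1}\{\mathbf g\in\Delta^{(2m_s)}_{2^{m_s}\mathbf m+\mathbf m'}: R_{2m_s\mathbf 1}(\mathbf g)=W^{(m_s)}_{\mathbf m\mathbf m'}\}$, $\widetilde F_s=\bigcap_{k=1}^sF_k$, $\widetilde F_0=\mathbb G^d$, $F=\bigcap_sF_s$. $F^{\boldsymbol\pi}_s$ is defined likewise with $W^{(m_s)}_{\boldsymbol\pi_s(\mathbf m)\,\mathbf m'}$ in place of $W^{(m_s)}_{\mathbf m\mathbf m'}$; $\widetilde F^{\boldsymbol\pi}_s=\bigcap_{k=1}^sF^{\boldsymbol\pi}_k$, $\widetilde F^{\boldsymbol\pi}_0=\mathbb G^d$, $F^{\boldsymbol\pi}=\bigcap_sF^{\boldsymbol\pi}_s$. *)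

theory Defs
  imports "HOL-Probability.Probability"
begin

text \<open>Points of the dyadic group G are sequences nat => bool (digit g k).\<close>

definition Gd :: "nat \<Rightarrow> (nat \<Rightarrow> nat \<Rightarrow> bool) set" where
  "Gd d = PiE {..<d} (\<lambda>_. UNIV)"

text \<open>Normalized Haar measure on G (product of fair coins) and on G^d.\<close>
definition muG :: "(nat \<Rightarrow> bool) measure" where
  "muG = PiM UNIV (\<lambda>_. measure_pmf (bernoulli_pmf (1/2)))"

definition mu :: "nat \<Rightarrow> (nat \<Rightarrow> nat \<Rightarrow> bool) measure" where
  "mu d = PiM {..<d} (\<lambda>_. muG)"

definition vecs :: "nat \<Rightarrow> nat \<Rightarrow> (nat \<Rightarrow> nat) set" where
  "vecs d k = PiE {..<d} (\<lambda>_. {..<2^k})"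

definition cube :: "nat \<Rightarrow> nat \<Rightarrow> (nat \<Rightarrow> nat) \<Rightarrow> (nat \<Rightarrow> nat \<Rightarrow> bool) set" where
  "cube d k m = {g \<in> Gd d. \<forall>l<d. \<forall>t<k. g l t = odd (m l div 2 ^ (k - 1 - t))}"

definition walsh :: "nat \<Rightarrow> (nat \<Rightarrow> bool) \<Rightarrow> real" where
  "walsh n g = (\<Prod>k<n. if odd (n div 2 ^ k) \<and> g k then -1 else 1)"

definition Wv :: "nat \<Rightarrow> (nat \<Rightarrow> nat) \<Rightarrow> (nat \<Rightarrow> nat \<Rightarrow> bool) \<Rightarrow> real" where
  "Wv d n g = (\<Prod>l<d. walsh (n l) (g l))"

definition cpt :: "nat \<Rightarrow> nat \<Rightarrow> (nat \<Rightarrow> nat) \<Rightarrow> (nat \<Rightarrow> nat \<Rightarrow> bool)" where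
  "cpt d k m = (\<lambda>l\<in>{..<d}. \<lambda>t. t < k \<and> odd (m l div 2 ^ (k - 1 - t)))"

text \<open>W^{(k)}_{n m}: the (constant) value of W_n on the cube of rank k with index m.\<close>
definition Wk :: "nat \<Rightarrow> nat \<Rightarrow> (nat \<Rightarrow> nat) \<Rightarrow> (nat \<Rightarrow> nat) \<Rightarrow> real" where
  "Wk d k n m = Wv d n (cpt d k m)"

definition Rk :: "nat \<Rightarrow> nat \<Rightarrow> (nat \<Rightarrow> nat \<Rightarrow> bool) \<Rightarrow> real" where
  "Rk d k g = Wv d (\<lambda>_. 2 ^ k) g"

text \<open>The sequence m_s (s >= 1): m_1 = 0, m_{s+1} = 2(2 m_s + 1). The value at 0 is unused.\<close>
fun ms :: "nat \<Rightarrow> nat" where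
  "ms 0 = 0"
| "ms (Suc 0) = 0"
| "ms (Suc (Suc s)) = 2 * (2 * ms (Suc s) + 1)"

text \<open>F^pi_s (for s >= 1); F_s is the case pi_s = id.\<close>
definition Fpi :: "nat \<Rightarrow> (nat \<Rightarrow> (nat \<Rightarrow> nat) \<Rightarrow> (nat \<Rightarrow> nat)) \<Rightarrow> nat \<Rightarrow> (nat \<Rightarrow> nat \<Rightarrow> bool) set" where
  "Fpi d \<pi> s = {g \<in> Gd d. \<exists>m \<in> vecs d (ms s). \<exists>m' \<in> vecs d (ms s).
       g \<in> cube d (2 * ms s) (\<lambda>l. 2 ^ ms s * m l + m' l) \<and>
       Rk d (2 * ms s) g = Wk d (ms s) (\<pi> s m) m'}"

definition Ftil :: "nat \<Rightarrow> (nat \<Rightarrow> (nat \<Rightarrow> nat) \<Rightarrow> (nat \<Rightarrow> nat)) \<Rightarrow> nat \<Rightarrow> (nat \<Rightarrow> nat \<Rightarrow> bool) set" where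
  "Ftil d \<pi> s = Gd d \<inter> (\<Inter>k\<in>{1..s}. Fpi d \<pi> k)"

definition Finf :: "nat \<Rightarrow> (nat \<Rightarrow> (nat \<Rightarrow> nat) \<Rightarrow> (nat \<Rightarrow> nat)) \<Rightarrow> (nat \<Rightarrow> nat \<Rightarrow> bool) set" where
  "Finf d \<pi> = Gd d \<inter> (\<Inter>s\<in>{1..}. Fpi d \<pi> s)"

text \<open>The quasimeasure tau_E on dyadic cubes (rank k, index m): tau_E(G^d) = 1, and the value
  of a cube is split equally among its children that meet E (children missing E get 0).\<close>
fun tauE :: "nat \<Rightarrow> (nat \<Rightarrow> nat \<Rightarrow> bool) set \<Rightarrow> nat \<Rightarrow> (nat \<Rightarrow> nat) \<Rightarrow> real" where
  "tauE d E 0 m = 1"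
| "tauE d E (Suc k) m =
     (if cube d (Suc k) m \<inter> E = {} then 0
      else tauE d E k (\<lambda>l. m l div 2) /
        real (card {\<sigma> \<in> PiE {..<d} (\<lambda>_. {0, 1}).
                      cube d (Suc k) (\<lambda>l. 2 * (m l div 2) + \<sigma> l) \<inter> E \<noteq> {}}))"

text \<open>Integral of W_n over the cube of rank r with index m w.r.t. a quasimeasure tau
  (tau k m' = value on the cube of rank k with index m'), computed at the least
  admissible level k >= r with n < 2^k 1.\<close>
definition qint :: "nat \<Rightarrow> (nat \<Rightarrow> (nat \<Rightarrow> nat) \<Rightarrow> real) \<Rightarrow> nat \<Rightarrow> (nat \<Rightarrow> nat) \<Rightarrow> (nat \<Rightarrow> nat) \<Rightarrow> real" where
  "qint d \<tau> r m n =
     (let k = (LEAST k. r \<le> k \<and> (\<forall>l<d. n l < 2 ^ k))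
      in \<Sum>m' \<in> {m' \<in> vecs d k. cube d k m' \<subseteq> cube d r m}. Wk d k n m' * \<tau> k m')"

end

theory Submission
  imports Defs
begin


abbreviation agree :: "nat \<Rightarrow> nat \<Rightarrow> (nat \<Rightarrow> nat \<Rightarrow> bool) \<Rightarrow> (nat \<Rightarrow> nat \<Rightarrow> bool) \<Rightarrow> bool" where
  "agree d k g h \<equiv> \<forall>l<d. \<forall>t<k. g l t = h l t"

lemma cube_iff: "g \<in> cube d k m \<longleftrightarrow> g \<in> Gd d \<and> (\<forall>l<d. \<forall>t<k. g l t = bit (m l) (k-1-t))"
  unfolding cube_def by (simp add: bit_iff_odd)

lemma cpt_eq: "cpt d k m = (\<lambda>l\<in>{..<d}. \<lambda>t. t < k \<and> bit (m l) (k-1-t))"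
  by (simp add: cpt_def bit_iff_odd)

lemma cpt_Gd: "cpt d k m \<in> Gd d" by (simp add: cpt_def Gd_def restrict_PiE_iff)

lemma cpt_app: "l < d \<Longrightarrow> cpt d k m l t = (t < k \<and> bit (m l) (k-1-t))"
  by (simp add: cpt_eq)

lemma cpt_cube: "cpt d k m \<in> cube d k m" unfolding cube_iff by (simp add: cpt_Gd cpt_app)

lemma agree_cpt: "g \<in> cube d k m \<Longrightarrow> agree d k g (cpt d k m)"
  unfolding cube_iff by (simp add: cpt_app)

lemma cube_agree: "g \<in> Gd d \<Longrightarrow> agree d k g (cpt d k m) \<Longrightarrow> g \<in> cube d k m"
  unfolding cube_iff by (simp add: cpt_app)

lemma cube_agree2: "g \<in> cube d k m \<Longrightarrow> h \<in> Gd d \<Longrightarrow> agree d k g h \<Longrightarrow> h \<in> cube d k m"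
  unfolding cube_iff by metis

lemma cube_mono: "g \<in> cube d k m \<Longrightarrow> r \<le> k \<Longrightarrow> cpt d k m \<in> cube d r mD \<Longrightarrow> g \<in> cube d r mD"
proof -
  assume g: "g \<in> cube d k m" and r: "r \<le> k" and c: "cpt d k m \<in> cube d r mD"
  have a: "agree d k g (cpt d k m)" using g by (rule agree_cpt)
  have "agree d r (cpt d k m) g" using a r by auto
  then show ?thesis using c g unfolding cube_iff by metis
qed

lemma cube_sub_iff: "r \<le> k \<Longrightarrow> cube d k m \<subseteq> cube d r mD \<longleftrightarrow> cpt d k m \<in> cube d r mD"
  using cube_mono cpt_cube by blast

primrec ix :: "nat \<Rightarrow> (nat \<Rightarrow> bool) \<Rightarrow> nat" where
  "ix 0 x = 0"
| "ix (Suc k) x = 2 * ix k x + (if x k then 1 else 0)"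

lemma ix_less: "ix k x < 2^k" by (induct k) auto

lemma bit_ix: "bit (ix k x) i \<longleftrightarrow> i < k \<and> x (k - 1 - i)"
proof (induct k arbitrary: i)
  case 0 then show ?case by simp
next
  case (Suc k)
  show ?case
  proof (cases i)
    case 0 then show ?thesis by (simp add: bit_0)
  next
    case (Suc j)
    have "(2 * ix k x + (if x k then 1 else 0)) div 2 = ix k x" by auto
    then show ?thesis using Suc.hyps[of j] Suc by (simp add: bit_Suc)
  qed
qed

lemma ix_cong: "(\<forall>t<k. x t = y t) \<Longrightarrow> ix k x = ix k y" by (induct k) auto

lemma nat_bits_eq: "(a::nat) < 2^k \<Longrightarrow> b < 2^k \<Longrightarrow> (\<forall>i<k. bit a i = bit b i) \<Longrightarrow> a = b"
proof -
  assume a: "a < 2^k" and b: "b < 2^k" and h: "\<forall>i<k. bit a i = bit b i"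
  have "take_bit k a = take_bit k b" by (rule bit_eqI) (use h in \<open>auto simp: bit_take_bit_iff\<close>)
  then show ?thesis using a b by (simp add: take_bit_nat_eq_self)
qed

lemma cube_ix: "g \<in> Gd d \<Longrightarrow> g \<in> cube d k (\<lambda>l. ix k (g l))"
  by (auto simp: cube_iff bit_ix)

lemma cube_uniq: "g \<in> cube d k m \<Longrightarrow> l < d \<Longrightarrow> m l < 2^k \<Longrightarrow> m l = ix k (g l)"
proof (rule nat_bits_eq[of _ k], simp, rule ix_less, intro allI impI)
  fix i assume g: "g \<in> cube d k m" and l: "l < d" and i: "i < k"
  have "g l (k - 1 - i) = bit (m l) (k - 1 - (k - 1 - i))" using g l i unfolding cube_iff by auto
  moreover have "k - 1 - (k - 1 - i) = i" using i by simp
  ultimately show "bit (m l) i = bit (ix k (g l)) i" using i by (simp add: bit_ix)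
qed

lemma space_mu: "space (mu d) = Gd d"
  by (simp add: mu_def muG_def space_PiM Gd_def PiE_UNIV_domain)

lemma prob_muG: "prob_space muG"
  unfolding muG_def by (intro prob_space_PiM prob_space_measure_pmf)

lemma prob_mu: "prob_space (mu d)"
  unfolding mu_def by (intro prob_space_PiM prob_muG)

lemma cyl_emb: "{x::nat\<Rightarrow>bool. \<forall>t<K. x t = b t} =
   prod_emb UNIV (\<lambda>_. measure_pmf (bernoulli_pmf (1/2))) {..<K} (PiE {..<K} (\<lambda>t. {b t}))"
  apply (rule set_eqI) apply (simp add: prod_emb_def space_PiM PiE_UNIV_domain restrict_PiE_iff Pi_iff) by blast

lemma cyl_sets: "{x::nat\<Rightarrow>bool. \<forall>t<K. x t = b t} \<in> sets muG"
  proof -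
  have "prod_emb UNIV (\<lambda>_. measure_pmf (bernoulli_pmf (1/2))) {..<K} (PiE {..<K} (\<lambda>t. {b t}))
     \<in> sets (PiM UNIV (\<lambda>_. measure_pmf (bernoulli_pmf (1/2))))"
    by (rule sets_PiM_I) auto
  then show ?thesis unfolding cyl_emb muG_def .
qed

lemma cyl_emeasure: "emeasure muG {x::nat\<Rightarrow>bool. \<forall>t<K. x t = b t} = ennreal ((1/2)^K)"
proof -
  have "emeasure muG {x::nat\<Rightarrow>bool. \<forall>t<K. x t = b t} =
     (\<Prod>t\<in>{..<K}. emeasure (measure_pmf (bernoulli_pmf (1/2))) {b t})"
    unfolding cyl_emb muG_def by (rule emeasure_PiM_emb) (auto intro: prob_space_measure_pmf)
  also have "\<dots> = (\<Prod>t\<in>{..<K}. ennreal (1/2))"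
    by (intro prod.cong refl) (simp add: emeasure_pmf_single)
  also have "\<dots> = ennreal (1/2) ^ K" by simp
  also have "\<dots> = ennreal ((1/2)^K)" by (rule ennreal_power) simp
  finally show ?thesis .
qed

lemma cube_PiE: "cube d k m = PiE {..<d} (\<lambda>l. {x. \<forall>t<k. x t = bit (m l) (k-1-t)})"
proof (intro set_eqI iffI)
  fix x assume "x \<in> cube d k m"
  then show "x \<in> PiE {..<d} (\<lambda>l. {x. \<forall>t<k. x t = bit (m l) (k-1-t)})"
    unfolding cube_iff Gd_def by (simp add: PiE_iff)
next
  fix x assume "x \<in> PiE {..<d} (\<lambda>l. {x. \<forall>t<k. x t = bit (m l) (k-1-t)})"
  then show "x \<in> cube d k m"
    unfolding cube_iff Gd_def by (simp add: PiE_iff)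
qed

lemma cube_sets: "cube d k m \<in> sets (mu d)"
  unfolding cube_PiE mu_def by (rule sets_PiM_I_finite) (auto intro: cyl_sets)

lemma cube_measure: "measure (mu d) (cube d k m) = (1/2)^(d*k)"
proof -
  have "emeasure (mu d) (cube d k m) = (\<Prod>l\<in>{..<d}. emeasure muG {x. \<forall>t<k. x t = bit (m l) (k-1-t)})"
    unfolding cube_PiE mu_def
    apply (subst prod_emb_PiE_same_index[symmetric, where M="\<lambda>_. muG"])
     apply (simp add: muG_def space_PiM PiE_UNIV_domain)
    by (rule emeasure_PiM_emb) (auto intro: prob_muG cyl_sets)
  also have "\<dots> = (\<Prod>l\<in>{..<d}. ennreal ((1/2)^k))"
    by (intro prod.cong refl) (simp only: cyl_emeasure)
  also have "\<dots> = ennreal ((1/2)^k) ^ d" by simp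
  also have "\<dots> = ennreal (((1/2)^k)^d)" by (rule ennreal_power) simp
  also have "((1/2::real)^k)^d = (1/2)^(d*k)" by (simp add: power_mult[symmetric] mult.commute)
  finally show ?thesis unfolding measure_def by (simp add: enn2real_ennreal)
qed

lemma vecs_finite: "finite (vecs d K)" by (simp add: vecs_def finite_PiE)

lemma ix_vec: "(\<lambda>l\<in>{..<d}. ix K (g l)) \<in> vecs d K"
  by (simp add: vecs_def restrict_PiE_iff ix_less)

lemma cube_ix': "g \<in> Gd d \<Longrightarrow> g \<in> cube d K (\<lambda>l\<in>{..<d}. ix K (g l))"
  unfolding cube_iff by (simp add: bit_ix)

lemma vec_uniq: "m \<in> vecs d K \<Longrightarrow> g \<in> cube d K m \<Longrightarrow> m = (\<lambda>l\<in>{..<d}. ix K (g l))"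
proof (rule ext)
  fix l assume m: "m \<in> vecs d K" and g: "g \<in> cube d K m"
  show "m l = (\<lambda>l\<in>{..<d}. ix K (g l)) l"
  proof (cases "l < d")
    case True
    have "m l < 2^K" using m True by (auto simp: vecs_def PiE_iff)
    then show ?thesis using cube_uniq[OF g True] True by simp
  next
    case False
    then show ?thesis using m by (auto simp: vecs_def PiE_iff extensional_def)
  qed
qed

lemma INT:
  fixes f :: "(nat \<Rightarrow> nat \<Rightarrow> bool) \<Rightarrow> real"
  assumes det: "\<forall>g\<in>Gd d. \<forall>h\<in>Gd d. agree d K g h \<longrightarrow> f g = f h"
  shows "integral\<^sup>L (mu d) f = (1/2)^(d*K) * (\<Sum>m\<in>vecs d K. f (cpt d K m))"
proof -
  interpret P: prob_space "mu d" by (rule prob_mu)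
  have eq: "f g = (\<Sum>m\<in>vecs d K. f (cpt d K m) * indicator (cube d K m) g)" if gs: "g \<in> space (mu d)" for g
  proof -
    have g: "g \<in> Gd d" using gs by (simp add: space_mu)
    define m0 where "m0 = (\<lambda>l\<in>{..<d}. ix K (g l))"
    have m0: "m0 \<in> vecs d K" "g \<in> cube d K m0" unfolding m0_def using ix_vec cube_ix'[OF g] by auto
    have "(\<Sum>m\<in>vecs d K. f (cpt d K m) * indicator (cube d K m) g)
        = (\<Sum>m\<in>vecs d K. if m = m0 then f (cpt d K m) else 0)"
    proof (rule sum.cong[OF refl])
      fix m assume m: "m \<in> vecs d K"
      show "f (cpt d K m) * indicator (cube d K m) g = (if m = m0 then f (cpt d K m) else 0)"
      proof (cases "m = m0")
        case True then show ?thesis using m0 by simp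
      next
        case False
        then have "g \<notin> cube d K m" using vec_uniq[OF m] unfolding m0_def by blast
        then show ?thesis using False by simp
      qed
    qed
    also have "\<dots> = f (cpt d K m0)" using m0 by (simp add: sum.delta vecs_finite)
    also have "\<dots> = f g" using det g cpt_Gd[of d K m0] agree_cpt[OF m0(2)] by blast
    finally show ?thesis by simp
  qed
  have "integral\<^sup>L (mu d) f = integral\<^sup>L (mu d) (\<lambda>g. \<Sum>m\<in>vecs d K. f (cpt d K m) * indicator (cube d K m) g)"
    using eq by (intro Bochner_Integration.integral_cong) auto
  also have "\<dots> = (\<Sum>m\<in>vecs d K. integral\<^sup>L (mu d) (\<lambda>g. f (cpt d K m) * indicator (cube d K m) g))"
    by (rule Bochner_Integration.integral_sum) (auto intro!: integrable_mult_right integrable_real_indicator cube_sets simp: less_top[symmetric])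
  also have "\<dots> = (\<Sum>m\<in>vecs d K. f (cpt d K m) * (1/2)^(d*K))"
  proof (rule sum.cong[OF refl])
    fix m
    have "cube d K m \<inter> space (mu d) = cube d K m" by (auto simp: space_mu cube_iff)
    then show "integral\<^sup>L (mu d) (\<lambda>g. f (cpt d K m) * indicator (cube d K m) g) = f (cpt d K m) * (1/2)^(d*K)"
      by (simp add: cube_measure)
  qed
  finally show ?thesis by (simp add: sum_distrib_left mult.commute)
qed

lemma walsh_cong: "(\<forall>i. odd (n div 2^i) \<longrightarrow> x i = y i) \<Longrightarrow> walsh n x = walsh n y"
  unfolding walsh_def by (rule prod.cong) auto

lemma walsh_det: "n < 2^K \<Longrightarrow> (\<forall>t<K. x t = y t) \<Longrightarrow> walsh n x = walsh n y"
proof (rule walsh_cong, intro allI impI)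
  fix i assume n: "n < 2^K" and a: "\<forall>t<K. x t = y t" and o: "odd (n div 2^i)"
  have "i < K"
  proof (rule ccontr)
    assume "\<not> i < K"
    then have "(2::nat)^K \<le> 2^i" by simp
    then have "n < 2^i" using n by (meson less_le_trans)
    then have "n div 2^i = 0" by (simp add: div_less)
    then show False using o by simp
  qed
  then show "x i = y i" using a by simp
qed

lemma Wv_det: "(\<forall>l<d. n l < 2^K) \<Longrightarrow> agree d K g h \<Longrightarrow> Wv d n g = Wv d n h"
  unfolding Wv_def by (rule prod.cong) (auto intro: walsh_det)

lemma abs_walsh: "\<bar>walsh n x\<bar> = 1"
  unfolding walsh_def abs_prod by (rule prod.neutral) simp

lemma abs_Wv: "\<bar>Wv d n g\<bar> = 1"
  unfolding Wv_def abs_prod by (rule prod.neutral) (simp add: abs_walsh)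

lemma walsh_pow2: "walsh (2^j) x = (if x j then -1 else 1)"
proof -
  have "walsh (2^j) x = (\<Prod>i<2^j. if i = j then (if x j then -1 else 1) else 1)"
    unfolding walsh_def
  proof (rule prod.cong[OF refl])
    fix i
    have "odd ((2::nat)^j div 2^i) \<longleftrightarrow> i = j"
      using bit_iff_odd[of "(2::nat)^j" i] by (simp add: bit_exp_iff)
    then show "(if odd ((2::nat) ^ j div 2 ^ i) \<and> x i then - 1 else 1) = (if i = j then (if x j then -1 else 1) else (1::real))"
      by auto
  qed
  also have "\<dots> = (if x j then -1 else 1)" by (simp add: prod.delta)
  finally show ?thesis .
qed

lemma Rk_eq: "Rk d j g = (\<Prod>l<d. if g l j then -1 else 1)"
  unfolding Rk_def Wv_def by (simp add: walsh_pow2)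

lemma cube_cong: "(\<forall>l<d. m1 l = m2 l) \<Longrightarrow> cube d k m1 = cube d k m2"
  unfolding cube_def by auto

definition mA :: "nat \<Rightarrow> nat \<Rightarrow> (nat \<Rightarrow> nat \<Rightarrow> bool) \<Rightarrow> nat \<Rightarrow> nat" where
  "mA d a g = (\<lambda>l\<in>{..<d}. ix (2*a) (g l) div 2^a)"
definition mB :: "nat \<Rightarrow> nat \<Rightarrow> (nat \<Rightarrow> nat \<Rightarrow> bool) \<Rightarrow> nat \<Rightarrow> nat" where
  "mB d a g = (\<lambda>l\<in>{..<d}. ix (2*a) (g l) mod 2^a)"

lemma pair_less: "(m::nat) < 2^a \<Longrightarrow> m' < 2^a \<Longrightarrow> 2^a * m + m' < 2^(2*a)"
proof -
  assume m: "m < 2^a" and m': "m' < 2^a"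
  have "2^a * m + m' < 2^a * m + 2^a" using m' by simp
  also have "\<dots> = 2^a * (m + 1)" by simp
  also have "\<dots> \<le> 2^a * 2^a" using m by (intro mult_le_mono2) simp
  also have "\<dots> = (2::nat)^(2*a)" by (simp add: power_add[symmetric] mult_2)
  finally show ?thesis .
qed

lemma Fpi_iff: "g \<in> Gd d \<Longrightarrow>
  g \<in> Fpi d \<pi> s \<longleftrightarrow> Rk d (2 * ms s) g = Wk d (ms s) (\<pi> s (mA d (ms s) g)) (mB d (ms s) g)"
proof -
  assume g: "g \<in> Gd d"
  let ?a = "ms s"
  have vA: "mA d ?a g \<in> vecs d ?a"
  proof -
    have "ix (2 * ?a) (g l) div 2^?a < 2^?a" for l
      using ix_less[of "2*?a" "g l"] by (simp add: less_mult_imp_div_less power_add[symmetric] mult_2)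
    then show ?thesis by (simp add: mA_def vecs_def restrict_PiE_iff)
  qed
  have vB: "mB d ?a g \<in> vecs d ?a" by (simp add: mB_def vecs_def restrict_PiE_iff)
  have cAB: "g \<in> cube d (2 * ?a) (\<lambda>l. 2 ^ ?a * mA d ?a g l + mB d ?a g l)"
  proof -
    have "cube d (2 * ?a) (\<lambda>l. 2 ^ ?a * mA d ?a g l + mB d ?a g l) = cube d (2 * ?a) (\<lambda>l. ix (2 * ?a) (g l))"
      by (rule cube_cong) (simp add: mA_def mB_def)
    then show ?thesis using cube_ix[OF g] by simp
  qed
  show ?thesis
  proof
    assume "g \<in> Fpi d \<pi> s"
    then obtain m m' where m: "m \<in> vecs d ?a" and m': "m' \<in> vecs d ?a"
      and c: "g \<in> cube d (2 * ?a) (\<lambda>l. 2 ^ ?a * m l + m' l)"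
      and R: "Rk d (2 * ?a) g = Wk d ?a (\<pi> s m) m'"
      unfolding Fpi_def by blast
    have e: "2 ^ ?a * m l + m' l = ix (2 * ?a) (g l)" if l: "l < d" for l
    proof -
      have "m l < 2^?a" "m' l < 2^?a" using m m' l by (auto simp: vecs_def PiE_iff)
      then have "2 ^ ?a * m l + m' l < 2^(2 * ?a)" by (rule pair_less)
      then show ?thesis using cube_uniq[OF c l] by simp
    qed
    have "m = mA d ?a g"
    proof (rule ext)
      fix l show "m l = mA d ?a g l"
      proof (cases "l < d")
        case True
        have "m' l < 2^?a" using m' True by (auto simp: vecs_def PiE_iff)
        then show ?thesis using e[OF True, symmetric] True by (simp add: mA_def)
      next
        case False then show ?thesis using m by (auto simp: mA_def vecs_def PiE_iff extensional_def)
      qed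
    qed
    moreover have "m' = mB d ?a g"
    proof (rule ext)
      fix l show "m' l = mB d ?a g l"
      proof (cases "l < d")
        case True
        have "m' l < 2^?a" using m' True by (auto simp: vecs_def PiE_iff)
        then show ?thesis using e[OF True, symmetric] True by (simp add: mB_def)
      next
        case False then show ?thesis using m' by (auto simp: mB_def vecs_def PiE_iff extensional_def)
      qed
    qed
    ultimately show "Rk d (2 * ?a) g = Wk d ?a (\<pi> s (mA d ?a g)) (mB d ?a g)" using R by simp
  next
    assume "Rk d (2 * ?a) g = Wk d ?a (\<pi> s (mA d ?a g)) (mB d ?a g)"
    then show "g \<in> Fpi d \<pi> s" unfolding Fpi_def using g vA vB cAB by blast
  qed
qed

definition flipd :: "nat \<Rightarrow> (nat \<Rightarrow> nat \<Rightarrow> bool) \<Rightarrow> (nat \<Rightarrow> nat \<Rightarrow> bool)" where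
  "flipd p g = g(0 := (g 0)(p := \<not> g 0 p))"

lemma flipd_app: "flipd p g l t = (if l = 0 \<and> t = p then \<not> g l t else g l t)"
  by (simp add: flipd_def)

lemma flipd_Gd: "0 < d \<Longrightarrow> g \<in> Gd d \<Longrightarrow> flipd p g \<in> Gd d"
  unfolding Gd_def flipd_def by (auto simp: PiE_iff extensional_def)

lemma ix_agree: "agree d k g h \<Longrightarrow> l < d \<Longrightarrow> ix k (g l) = ix k (h l)"
  by (rule ix_cong) simp

lemma mA_cong: "agree d (2*a) g h \<Longrightarrow> mA d a g = mA d a h"
  unfolding mA_def by (intro ext) (simp add: ix_agree)

lemma mB_cong: "agree d (2*a) g h \<Longrightarrow> mB d a g = mB d a h"
  unfolding mB_def by (intro ext) (simp add: ix_agree)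

lemma Rk_flip: "0 < d \<Longrightarrow> Rk d j (flipd j g) = - Rk d j g"
proof -
  assume d: "0 < d"
  have "Rk d j (flipd j g) = (if flipd j g 0 j then -1 else 1) * (\<Prod>l\<in>{..<d} - {0}. if flipd j g l j then -1 else (1::real))"
    unfolding Rk_eq using d by (subst prod.remove[of _ 0]) auto
  also have "(\<Prod>l\<in>{..<d} - {0}. if flipd j g l j then -1 else (1::real)) = (\<Prod>l\<in>{..<d} - {0}. if g l j then -1 else 1)"
    by (rule prod.cong) (auto simp: flipd_app)
  also have "(if flipd j g 0 j then -1 else (1::real)) = - (if g 0 j then -1 else 1)"
    by (simp add: flipd_app)
  also have "- (if g 0 j then -1 else (1::real)) * (\<Prod>l\<in>{..<d} - {0}. if g l j then -1 else 1) = - Rk d j g"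
    unfolding Rk_eq using d by (subst (2) prod.remove[of _ 0]) auto
  finally show ?thesis .
qed

lemma abs1_neg: "\<bar>x::real\<bar> = 1 \<Longrightarrow> \<bar>y\<bar> = 1 \<Longrightarrow> (- x = y \<longleftrightarrow> x \<noteq> y)"
  by (auto simp: abs_if split: if_splits)

lemma Fpi_toggle: "0 < d \<Longrightarrow> g \<in> Gd d \<Longrightarrow> flipd (2 * ms s) g \<in> Fpi d \<pi> s \<longleftrightarrow> g \<notin> Fpi d \<pi> s"
proof -
  assume d: "0 < d" and g: "g \<in> Gd d"
  let ?a = "ms s"
  have ag: "agree d (2 * ?a) (flipd (2 * ?a) g) g" by (simp add: flipd_app)
  have "flipd (2 * ms s) g \<in> Fpi d \<pi> s \<longleftrightarrow> - Rk d (2 * ?a) g = Wk d ?a (\<pi> s (mA d ?a g)) (mB d ?a g)"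
    using Fpi_iff[OF flipd_Gd[OF d g]] Rk_flip[OF d] mA_cong[OF ag] mB_cong[OF ag] by simp
  also have "\<dots> \<longleftrightarrow> Rk d (2 * ?a) g \<noteq> Wk d ?a (\<pi> s (mA d ?a g)) (mB d ?a g)"
    by (rule abs1_neg) (simp_all add: Rk_def Wk_def abs_Wv)
  also have "\<dots> \<longleftrightarrow> g \<notin> Fpi d \<pi> s" using Fpi_iff[OF g] by simp
  finally show ?thesis .
qed

lemma Fpi_det: "g \<in> Gd d \<Longrightarrow> h \<in> Gd d \<Longrightarrow> agree d (Suc (2 * ms s)) g h \<Longrightarrow>
   g \<in> Fpi d \<pi> s \<longleftrightarrow> h \<in> Fpi d \<pi> s"
proof -
  assume g: "g \<in> Gd d" and h: "h \<in> Gd d" and a: "agree d (Suc (2 * ms s)) g h"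
  then have a2: "agree d (2 * ms s) g h" by simp
  have "Rk d (2 * ms s) g = Rk d (2 * ms s) h" unfolding Rk_eq using a by (intro prod.cong) auto
  then show ?thesis using Fpi_iff[OF g] Fpi_iff[OF h] mA_cong[OF a2] mB_cong[OF a2] by simp
qed

lemma ms_Suc: "1 \<le> t \<Longrightarrow> ms (Suc t) = 4 * ms t + 2"
  by (cases t) auto

lemma ms_step: "ms t \<le> ms (Suc t)"
  by (cases t) auto

lemma ms_mono: "i \<le> j \<Longrightarrow> ms i \<le> ms j"
  using ms_step by (rule lift_Suc_mono_le)

lemma ms_gap: "1 \<le> i \<Longrightarrow> i < j \<Longrightarrow> 2 * ms i + 1 < ms j"
proof -
  assume i: "1 \<le> i" and j: "i < j"
  have "ms (Suc i) \<le> ms j" using j by (intro ms_mono) simp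
  then show ?thesis using ms_Suc[OF i] by simp
qed

lemma ms_ge: "t \<le> ms t + 1"
  by (induct t rule: ms.induct) auto

primrec hs :: "nat \<Rightarrow> (nat \<Rightarrow> (nat \<Rightarrow> nat) \<Rightarrow> (nat \<Rightarrow> nat)) \<Rightarrow> nat \<Rightarrow> (nat \<Rightarrow> nat) \<Rightarrow> nat \<Rightarrow> (nat \<Rightarrow> nat \<Rightarrow> bool)" where
  "hs d \<pi> k m 0 = cpt d k m"
| "hs d \<pi> k m (Suc j) = (if k \<le> 2 * ms (Suc j) \<and> hs d \<pi> k m j \<notin> Fpi d \<pi> (Suc j)
      then flipd (2 * ms (Suc j)) (hs d \<pi> k m j) else hs d \<pi> k m j)"

lemma hs_Gd: "0 < d \<Longrightarrow> hs d \<pi> k m j \<in> Gd d"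
  by (induct j) (auto simp: cpt_Gd flipd_Gd)

lemma hs_step: "t \<noteq> 2 * ms (Suc j) \<or> 2 * ms (Suc j) < k \<Longrightarrow> hs d \<pi> k m (Suc j) l t = hs d \<pi> k m j l t"
  by (auto simp: flipd_app)

lemma hs_stable: "i \<le> j \<Longrightarrow> (\<forall>q. i < q \<and> q \<le> j \<longrightarrow> t \<noteq> 2 * ms q \<or> 2 * ms q < k) \<Longrightarrow>
   hs d \<pi> k m j l t = hs d \<pi> k m i l t"
proof (induct j)
  case 0 then show ?case by simp
next
  case (Suc j)
  show ?case
  proof (cases "i = Suc j")
    case True then show ?thesis by simp
  next
    case False
    then have ij: "i \<le> j" using Suc.prems by simp
    have "hs d \<pi> k m (Suc j) l t = hs d \<pi> k m j l t"
      using Suc.prems(2) False ij by (intro hs_step) auto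
    also have "\<dots> = hs d \<pi> k m i l t" using Suc.hyps ij Suc.prems(2) by auto
    finally show ?thesis .
  qed
qed

lemma hs_low: "t < k \<Longrightarrow> hs d \<pi> k m j l t = cpt d k m l t"
  using hs_stable[of 0 j t k d \<pi> m l] by auto

lemma hs_G: "1 \<le> j \<Longrightarrow> t \<le> 2 * ms j \<Longrightarrow> hs d \<pi> k m (Suc t) l t = hs d \<pi> k m j l t"
proof (cases "j \<le> Suc t")
  case True
  assume j: "1 \<le> j" and t: "t \<le> 2 * ms j"
  have "\<forall>q. j < q \<and> q \<le> Suc t \<longrightarrow> t \<noteq> 2 * ms q \<or> 2 * ms q < k"
  proof (intro allI impI)
    fix q assume "j < q \<and> q \<le> Suc t"
    then have "2 * ms j + 1 < ms q" using ms_gap j by blast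
    then show "t \<noteq> 2 * ms q \<or> 2 * ms q < k" using t by simp
  qed
  then show ?thesis using hs_stable[OF True] by blast
next
  case False
  assume j: "1 \<le> j" and t: "t \<le> 2 * ms j"
  have "\<forall>q. Suc t < q \<and> q \<le> j \<longrightarrow> t \<noteq> 2 * ms q \<or> 2 * ms q < k"
  proof (intro allI impI)
    fix q assume "Suc t < q \<and> q \<le> j"
    then show "t \<noteq> 2 * ms q \<or> 2 * ms q < k" using ms_ge[of q] by simp
  qed
  then show ?thesis using hs_stable[of "Suc t" j] False by simp
qed

lemma hs_Fpi:
  assumes d: "0 < d" and j: "1 \<le> j" and hyp: "\<forall>t. 1 \<le> t \<and> 2 * ms t < k \<longrightarrow> cpt d k m \<in> Fpi d \<pi> t"
  shows "hs d \<pi> k m j \<in> Fpi d \<pi> j"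
proof -
  obtain j' where j': "j = Suc j'" using j by (cases j) auto
  show ?thesis
  proof (cases "k \<le> 2 * ms j")
    case True
    show ?thesis
    proof (cases "hs d \<pi> k m j' \<in> Fpi d \<pi> j")
      case True2: True
      then show ?thesis using j' by simp
    next
      case False
      have "flipd (2 * ms j) (hs d \<pi> k m j') \<in> Fpi d \<pi> j"
        using Fpi_toggle[OF d hs_Gd[OF d, of \<pi> k m j'], where s=j and \<pi>=\<pi>] False by simp
      then show ?thesis using j' True False by simp
    qed
  next
    case False
    have "agree d (Suc (2 * ms j)) (hs d \<pi> k m j) (cpt d k m)"
      using False by (auto simp: hs_low)
    then have "hs d \<pi> k m j \<in> Fpi d \<pi> j \<longleftrightarrow> cpt d k m \<in> Fpi d \<pi> j"
      by (rule Fpi_det[OF hs_Gd[OF d] cpt_Gd])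
    then show ?thesis using hyp False j by simp
  qed
qed

lemma meets_iff:
  assumes d: "0 < d"
  shows "cube d k m \<inter> Finf d \<pi> \<noteq> {} \<longleftrightarrow> (\<forall>t. 1 \<le> t \<and> 2 * ms t < k \<longrightarrow> cpt d k m \<in> Fpi d \<pi> t)"
proof
  assume "cube d k m \<inter> Finf d \<pi> \<noteq> {}"
  then obtain g where gc: "g \<in> cube d k m" and gF: "g \<in> Finf d \<pi>" by blast
  have g: "g \<in> Gd d" using gc by (simp add: cube_iff)
  show "\<forall>t. 1 \<le> t \<and> 2 * ms t < k \<longrightarrow> cpt d k m \<in> Fpi d \<pi> t"
  proof (intro allI impI)
    fix t assume t: "1 \<le> t \<and> 2 * ms t < k"
    have "g \<in> Fpi d \<pi> t" using gF t by (auto simp: Finf_def)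
    moreover have "agree d (Suc (2 * ms t)) g (cpt d k m)" using agree_cpt[OF gc] t by auto
    ultimately show "cpt d k m \<in> Fpi d \<pi> t" using Fpi_det[OF g cpt_Gd] by blast
  qed
next
  assume hyp: "\<forall>t. 1 \<le> t \<and> 2 * ms t < k \<longrightarrow> cpt d k m \<in> Fpi d \<pi> t"
  define G where "G = (\<lambda>l\<in>{..<d}. \<lambda>t. hs d \<pi> k m (Suc t) l t)"
  have G: "G \<in> Gd d" by (simp add: G_def Gd_def restrict_PiE_iff)
  have "G \<in> cube d k m"
    by (rule cube_agree[OF G]) (simp add: G_def hs_low del: hs.simps)
  moreover have "G \<in> Fpi d \<pi> j" if j: "1 \<le> j" for j
  proof -
    have "agree d (Suc (2 * ms j)) G (hs d \<pi> k m j)"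
      using hs_G[OF j] by (simp add: G_def)
    then show ?thesis using Fpi_det[OF G hs_Gd[OF d]] hs_Fpi[OF d j hyp] by blast
  qed
  ultimately show "cube d k m \<inter> Finf d \<pi> \<noteq> {}" using G by (auto simp: Finf_def)
qed

definition J :: "nat \<Rightarrow> nat" where "J k = card {t. 1 \<le> t \<and> 2 * ms t < k}"

lemma J_fin: "finite {t. 1 \<le> t \<and> 2 * ms t < k}"
proof (rule finite_subset[of _ "{..k}"])
  show "{t. 1 \<le> t \<and> 2 * ms t < k} \<subseteq> {..k}"
  proof (intro subsetI)
    fix t assume "t \<in> {t. 1 \<le> t \<and> 2 * ms t < k}"
    then show "t \<in> {..k}" using ms_ge[of t] by simp
  qed
qed simp

lemma ms_inj: "1 \<le> t1 \<Longrightarrow> 1 \<le> t2 \<Longrightarrow> ms t1 = ms t2 \<Longrightarrow> t1 = t2"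
proof (rule ccontr)
  assume h1: "1 \<le> t1" and h2: "1 \<le> t2" and e: "ms t1 = ms t2" and ne: "t1 \<noteq> t2"
  then have "t1 < t2 \<or> t2 < t1" by arith
  then show False using ms_gap[OF h1, of t2] ms_gap[OF h2, of t1] e by auto
qed

lemma J_0: "J 0 = 0" by (simp add: J_def)

lemma J_Suc: "J (Suc k) = J k + (if \<exists>t\<ge>1. 2 * ms t = k then 1 else 0)"
proof (cases "\<exists>t\<ge>1. 2 * ms t = k")
  case True
  then obtain t0 where t0: "1 \<le> t0" "2 * ms t0 = k" by blast
  have "{t. 1 \<le> t \<and> 2 * ms t < Suc k} = insert t0 {t. 1 \<le> t \<and> 2 * ms t < k}"
    using t0 ms_inj by (auto simp: less_Suc_eq)
  moreover have "t0 \<notin> {t. 1 \<le> t \<and> 2 * ms t < k}" using t0 by simp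
  ultimately show ?thesis using True J_fin unfolding J_def by simp
next
  case False
  then have "{t. 1 \<le> t \<and> 2 * ms t < Suc k} = {t. 1 \<le> t \<and> 2 * ms t < k}"
    by (auto simp: less_Suc_eq)
  then show ?thesis using False unfolding J_def by simp
qed

lemma bit2_Suc: "x \<le> 1 \<Longrightarrow> bit (2 * p + x) (Suc e) = bit (p::nat) e"
proof -
  assume "x \<le> 1"
  then have "(2 * p + x) div 2 = p" by auto
  then show ?thesis by (simp add: bit_Suc)
qed

lemma bit2_0: "bit (2 * p + x) 0 = odd (x::nat)"
  by (simp add: bit_0)

definition flips :: "(nat \<Rightarrow> nat) \<Rightarrow> (nat \<Rightarrow> nat)" where
  "flips \<sigma> = \<sigma>(0 := 1 - \<sigma> 0)"

lemma child_agree: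
  assumes "\<forall>l<d. \<sigma> l \<le> 1"
  shows "agree d k (cpt d (Suc k) (\<lambda>l. 2 * p l + \<sigma> l)) (cpt d k p)"
proof (intro allI impI)
  fix l t assume l: "l < d" and t: "t < k"
  have "Suc k - 1 - t = Suc (k - 1 - t)" using t by simp
  then show "cpt d (Suc k) (\<lambda>l. 2 * p l + \<sigma> l) l t = cpt d k p l t"
    using l t assms by (simp add: cpt_app bit2_Suc)
qed

lemma child_flip:
  assumes d: "0 < d" and s: "\<sigma> \<in> PiE {..<d} (\<lambda>_. {0, 1})"
  shows "cpt d (Suc k) (\<lambda>l. 2 * p l + flips \<sigma> l) = flipd k (cpt d (Suc k) (\<lambda>l. 2 * p l + \<sigma> l))"
proof (intro ext)
  fix l t
  show "cpt d (Suc k) (\<lambda>l. 2 * p l + flips \<sigma> l) l t = flipd k (cpt d (Suc k) (\<lambda>l. 2 * p l + \<sigma> l)) l t"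
  proof (cases "l < d")
    case False
    then show ?thesis using d by (simp add: cpt_def flipd_app)
  next
    case True
    have "\<sigma> l \<in> {0, 1}" "\<sigma> 0 \<in> {0, 1}" using PiE_mem[OF s, of l] PiE_mem[OF s, of 0] True d by auto
    then have s01: "\<sigma> l \<le> 1" "flips \<sigma> l \<le> 1" by (auto simp: flips_def)
    show ?thesis
    proof (cases "l = 0")
      case False
      then show ?thesis using True by (simp add: cpt_app flipd_app flips_def)
    next
      case l0: True
      show ?thesis
      proof (cases "t < k")
        case True
        have "Suc k - 1 - t = Suc (k - 1 - t)" using True by simp
        then show ?thesis using True l0 d s01 by (simp add: cpt_app flipd_app bit2_Suc)
      next
        case False
        show ?thesis
        proof (cases "t = k")
          case True
          have "\<sigma> 0 \<in> {0, 1}" using PiE_mem[OF s, of 0] d by simp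
          then show ?thesis using True l0 d by (auto simp: cpt_app flipd_app bit2_0 flips_def)
        next
          case False
          then show ?thesis using \<open>\<not> t < k\<close> l0 d by (simp add: cpt_app flipd_app)
        qed
      qed
    qed
  qed
qed

lemma half_card:
  assumes fin: "finite A" and inv: "\<forall>x\<in>A. f x \<in> A \<and> f (f x) = x \<and> (P (f x) \<longleftrightarrow> \<not> P x)"
  shows "2 * card {x\<in>A. P x} = card A"
proof -
  let ?S = "{x\<in>A. P x}"
  have img: "f ` ?S = A - ?S"
  proof
    show "f ` ?S \<subseteq> A - ?S" using inv by auto
  next
    show "A - ?S \<subseteq> f ` ?S"
    proof
      fix y assume y: "y \<in> A - ?S"
      then have "f y \<in> ?S" "y = f (f y)" using inv by auto
      then show "y \<in> f ` ?S" by blast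
    qed
  qed
  have inj: "inj_on f ?S" by (rule inj_on_inverseI[where g=f]) (use inv in auto)
  have Ssub: "?S \<subseteq> A" by blast
  have "card (A - ?S) = card ?S" using img card_image[OF inj] by simp
  moreover have "card (A - ?S) = card A - card ?S" using finite_subset[OF Ssub fin] Ssub by (rule card_Diff_subset)
  moreover have "card ?S \<le> card A" using card_mono[OF fin Ssub] .
  ultimately show ?thesis by simp
qed

lemma child_count:
  assumes d: "0 < d" and pm: "cube d k p \<inter> Finf d \<pi> \<noteq> {}"
  shows "card {\<sigma> \<in> PiE {..<d} (\<lambda>_. {0, 1}). cube d (Suc k) (\<lambda>l. 2 * p l + \<sigma> l) \<inter> Finf d \<pi> \<noteq> {}}
     = (if \<exists>t\<ge>1. 2 * ms t = k then 2^(d-1) else 2^d)"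
proof -
  let ?A = "PiE {..<d} (\<lambda>_. {0::nat, 1})"
  let ?c = "\<lambda>\<sigma>. cpt d (Suc k) (\<lambda>l. 2 * p l + \<sigma> l)"
  have par: "\<forall>t. 1 \<le> t \<and> 2 * ms t < k \<longrightarrow> cpt d k p \<in> Fpi d \<pi> t" using pm meets_iff[OF d] by blast
  have cA: "card ?A = 2^d" by (simp add: card_PiE numeral_2_eq_2)
  have ch: "cube d (Suc k) (\<lambda>l. 2 * p l + \<sigma> l) \<inter> Finf d \<pi> \<noteq> {} \<longleftrightarrow>
        (\<forall>t. 1 \<le> t \<and> 2 * ms t = k \<longrightarrow> ?c \<sigma> \<in> Fpi d \<pi> t)" if s: "\<sigma> \<in> ?A" for \<sigma>
  proof -
    have s1: "\<forall>l<d. \<sigma> l \<le> 1"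
    proof (intro allI impI)
      fix l assume "l < d"
      then have "\<sigma> l \<in> {0, 1}" using PiE_mem[OF s, of l] by simp
      then show "\<sigma> l \<le> 1" by auto
    qed
    have low: "?c \<sigma> \<in> Fpi d \<pi> t" if t: "1 \<le> t" "2 * ms t < k" for t
    proof -
      have "agree d (Suc (2 * ms t)) (?c \<sigma>) (cpt d k p)" using child_agree[OF s1, of k p] t by auto
      then have "?c \<sigma> \<in> Fpi d \<pi> t \<longleftrightarrow> cpt d k p \<in> Fpi d \<pi> t" by (rule Fpi_det[OF cpt_Gd cpt_Gd])
      then show ?thesis using par t by simp
    qed
    have "cube d (Suc k) (\<lambda>l. 2 * p l + \<sigma> l) \<inter> Finf d \<pi> \<noteq> {} \<longleftrightarrow>
        (\<forall>t. 1 \<le> t \<and> 2 * ms t < Suc k \<longrightarrow> ?c \<sigma> \<in> Fpi d \<pi> t)" by (rule meets_iff[OF d])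
    also have "\<dots> \<longleftrightarrow> (\<forall>t. 1 \<le> t \<and> 2 * ms t = k \<longrightarrow> ?c \<sigma> \<in> Fpi d \<pi> t)"
    proof (intro iffI allI impI)
      fix t assume H: "\<forall>t. 1 \<le> t \<and> 2 * ms t < Suc k \<longrightarrow> ?c \<sigma> \<in> Fpi d \<pi> t" and t: "1 \<le> t \<and> 2 * ms t = k"
      then show "?c \<sigma> \<in> Fpi d \<pi> t" by simp
    next
      fix t assume H: "\<forall>t. 1 \<le> t \<and> 2 * ms t = k \<longrightarrow> ?c \<sigma> \<in> Fpi d \<pi> t" and t: "1 \<le> t \<and> 2 * ms t < Suc k"
      show "?c \<sigma> \<in> Fpi d \<pi> t"
      proof (cases "2 * ms t = k")
        case True then show ?thesis using H t by simp
      next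
        case False then have "2 * ms t < k" using t by simp
        then show ?thesis using low t by simp
      qed
    qed
    finally show ?thesis .
  qed
  show ?thesis
  proof (cases "\<exists>t\<ge>1. 2 * ms t = k")
    case False
    have "{\<sigma> \<in> ?A. cube d (Suc k) (\<lambda>l. 2 * p l + \<sigma> l) \<inter> Finf d \<pi> \<noteq> {}} = ?A"
    proof (intro set_eqI iffI)
      fix \<sigma> assume "\<sigma> \<in> ?A"
      then show "\<sigma> \<in> {\<sigma> \<in> ?A. cube d (Suc k) (\<lambda>l. 2 * p l + \<sigma> l) \<inter> Finf d \<pi> \<noteq> {}}"
        using ch[of \<sigma>] False by blast
    qed simp
    then show ?thesis using cA by (simp only: False if_False)
  next
    case True
    then obtain t0 where t0: "1 \<le> t0" "2 * ms t0 = k" by blast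
    let ?S = "{\<sigma> \<in> ?A. ?c \<sigma> \<in> Fpi d \<pi> t0}"
    have eqS: "{\<sigma> \<in> ?A. cube d (Suc k) (\<lambda>l. 2 * p l + \<sigma> l) \<inter> Finf d \<pi> \<noteq> {}} = ?S"
    proof (rule Collect_cong)
      fix \<sigma>
      have tt: "1 \<le> t \<and> 2 * ms t = k \<longleftrightarrow> t = t0" for t
        using t0 ms_inj[of t t0] by auto
      show "(\<sigma> \<in> ?A \<and> cube d (Suc k) (\<lambda>l. 2 * p l + \<sigma> l) \<inter> Finf d \<pi> \<noteq> {}) = (\<sigma> \<in> ?A \<and> ?c \<sigma> \<in> Fpi d \<pi> t0)"
        using ch[of \<sigma>] tt by auto
    qed
    have fA: "flips \<sigma> \<in> ?A" if "\<sigma> \<in> ?A" for \<sigma>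
    proof -
      have "\<sigma>(0 := 1 - \<sigma> 0) \<in> PiE (insert 0 {..<d}) (\<lambda>_. {0::nat, 1})"
        by (rule PiE_fun_upd[OF _ that]) auto
      moreover have "insert 0 {..<d} = {..<d}" using d by auto
      ultimately show ?thesis by (simp add: flips_def)
    qed
    have ff: "flips (flips \<sigma>) = \<sigma>" if "\<sigma> \<in> ?A" for \<sigma>
    proof -
      have "\<sigma> 0 \<in> {0, 1}" using PiE_mem[OF that, of 0] d by simp
      then show ?thesis by (auto simp: flips_def fun_eq_iff)
    qed
    have tog: "?c (flips \<sigma>) \<in> Fpi d \<pi> t0 \<longleftrightarrow> ?c \<sigma> \<notin> Fpi d \<pi> t0" if "\<sigma> \<in> ?A" for \<sigma>
      using child_flip[OF d that, of k p] Fpi_toggle[OF d cpt_Gd, where s=t0 and \<pi>=\<pi>] t0 by simp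
    have fin: "finite ?A" by (simp add: finite_PiE)
    have "2 * card ?S = card ?A"
    proof (rule half_card[where f=flips and P="\<lambda>\<sigma>. ?c \<sigma> \<in> Fpi d \<pi> t0", OF fin], intro ballI conjI)
      fix \<sigma> assume s: "\<sigma> \<in> ?A"
      show "flips \<sigma> \<in> ?A" by (rule fA[OF s])
      show "flips (flips \<sigma>) = \<sigma>" by (rule ff[OF s])
      show "(?c (flips \<sigma>) \<in> Fpi d \<pi> t0) = (?c \<sigma> \<notin> Fpi d \<pi> t0)" by (rule tog[OF s])
    qed
    then have "2 * card ?S = 2^d" using cA by simp
    moreover have "(2::nat)^d = 2 * 2^(d-1)" using d by (cases d) auto
    ultimately have "card ?S = 2^(d-1)" by simp
    then show ?thesis using eqS True by simp
  qed
qed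

lemma tau_formula:
  assumes d: "0 < d"
  shows "tauE d (Finf d \<pi>) k m = (if cube d k m \<inter> Finf d \<pi> = {} then 0 else 2^(J k) / 2^(d*k))"
proof (induct k arbitrary: m)
  case 0
  have "cube d 0 m \<inter> Finf d \<pi> \<noteq> {}" using meets_iff[OF d, of 0 m \<pi>] by simp
  then show ?case by (simp add: J_0)
next
  case (Suc k)
  show ?case
  proof (cases "cube d (Suc k) m \<inter> Finf d \<pi> = {}")
    case True then show ?thesis by simp
  next
    case False
    let ?p = "\<lambda>l. m l div 2"
    have sub: "cube d (Suc k) m \<subseteq> cube d k ?p"
    proof
      fix g assume g: "g \<in> cube d (Suc k) m"
      show "g \<in> cube d k ?p" unfolding cube_iff
      proof (intro conjI allI impI)
        show "g \<in> Gd d" using g by (simp add: cube_iff)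
        fix l t assume l: "l < d" and t: "t < k"
        have "Suc k - 1 - t = Suc (k - 1 - t)" using t by simp
        then show "g l t = bit (m l div 2) (k - 1 - t)" using g l t unfolding cube_iff by (simp add: bit_Suc)
      qed
    qed
    then have pm: "cube d k ?p \<inter> Finf d \<pi> \<noteq> {}" using False by blast
    have cc: "card {\<sigma> \<in> PiE {..<d} (\<lambda>_. {0, 1}). cube d (Suc k) (\<lambda>l. 2 * (m l div 2) + \<sigma> l) \<inter> Finf d \<pi> \<noteq> {}}
       = (if \<exists>t\<ge>1. 2 * ms t = k then 2^(d-1) else 2^d)"
      using child_count[OF d pm] by simp
    obtain d' where d': "d = Suc d'" using d by (cases d) auto
    have "tauE d (Finf d \<pi>) (Suc k) m = (2^(J k) / 2^(d*k)) / real (if \<exists>t\<ge>1. 2 * ms t = k then 2^(d-1) else 2^d)"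
      using False Suc[of ?p] pm cc by simp
    also have "\<dots> = 2^(J (Suc k)) / 2^(d * Suc k)"
      unfolding J_Suc d' by (simp add: power_add field_simps)
    finally show ?thesis using False by simp
  qed
qed

lemma half_sum:
  fixes h :: "'a \<Rightarrow> real"
  assumes fin: "finite A" and inv: "\<And>x. x \<in> A \<Longrightarrow> \<phi> x \<in> A \<and> \<phi> (\<phi> x) = x"
    and tg: "\<And>x. x \<in> A \<Longrightarrow> P (\<phi> x) \<longleftrightarrow> \<not> P x" and hh: "\<And>x. x \<in> A \<Longrightarrow> h (\<phi> x) = h x"
  shows "2 * (\<Sum>x\<in>A. if P x then h x else 0) = (\<Sum>x\<in>A. h x)"
proof -
  have "(\<Sum>x\<in>A. if P x then h x else 0) = (\<Sum>x\<in>A. if \<not> P x then h x else 0)"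
  proof (rule sum.reindex_bij_witness[where i=\<phi> and j=\<phi>])
    fix x assume x: "x \<in> A"
    show "\<phi> (\<phi> x) = x" "\<phi> x \<in> A" using inv[OF x] by auto
    show "(if \<not> P (\<phi> x) then h (\<phi> x) else 0) = (if P x then h x else 0)" using tg[OF x] hh[OF x] by simp
  next
    fix x assume x: "x \<in> A"
    show "\<phi> (\<phi> x) = x" "\<phi> x \<in> A" using inv[OF x] by auto
  qed
  moreover have "(\<Sum>x\<in>A. h x) = (\<Sum>x\<in>A. if P x then h x else 0) + (\<Sum>x\<in>A. if \<not> P x then h x else 0)"
    by (simp add: sum.distrib[symmetric] if_distrib) (rule sum.cong, auto)
  ultimately show ?thesis by simp
qed

lemma cpt_cong: "(\<forall>l<d. m1 l = m2 l) \<Longrightarrow> cpt d k m1 = cpt d k m2"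
  unfolding cpt_def by (intro ext) auto

definition phiv :: "nat \<Rightarrow> (nat \<Rightarrow> nat) \<Rightarrow> (nat \<Rightarrow> nat)" where
  "phiv d m = (\<lambda>l\<in>{..<d}. 2 * (m l div 2) + flips (\<lambda>l\<in>{..<d}. m l mod 2) l)"

lemma phiv_0: "0 < d \<Longrightarrow> phiv d m 0 = 2 * (m 0 div 2) + (1 - m 0 mod 2)"
  by (simp add: phiv_def flips_def)

lemma phiv_l: "l < d \<Longrightarrow> l \<noteq> 0 \<Longrightarrow> phiv d m l = m l"
  by (simp add: phiv_def flips_def)

lemma phiv_vecs: "0 < d \<Longrightarrow> m \<in> vecs d (Suc j) \<Longrightarrow> phiv d m \<in> vecs d (Suc j)"
proof -
  assume d: "0 < d" and m: "m \<in> vecs d (Suc j)"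
  have "phiv d m l < 2 ^ Suc j" if l: "l < d" for l
  proof -
    have ml: "m l < 2 * 2^j" using m l by (auto simp: vecs_def PiE_iff)
    then have "m l div 2 < 2^j" by (simp add: less_mult_imp_div_less mult.commute)
    moreover have "flips (\<lambda>l\<in>{..<d}. m l mod 2) l \<le> 1" using l by (auto simp: flips_def)
    ultimately have "2 * (m l div 2) + flips (\<lambda>l\<in>{..<d}. m l mod 2) l < 2 * 2^j" by linarith
    then show ?thesis using l by (simp add: phiv_def)
  qed
  then show ?thesis by (simp add: vecs_def phiv_def restrict_PiE_iff)
qed

lemma phiv_inv: "0 < d \<Longrightarrow> m \<in> vecs d K \<Longrightarrow> phiv d (phiv d m) = m"
proof (rule ext)
  fix l assume d: "0 < d" and m: "m \<in> vecs d K"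
  show "phiv d (phiv d m) l = m l"
  proof (cases "l < d")
    case False
    then show ?thesis using m by (simp add: phiv_def vecs_def PiE_iff extensional_def)
  next
    case True
    show ?thesis
    proof (cases "l = 0")
      case True
      have r: "m 0 mod 2 \<le> 1" by simp
      have "(2 * (m 0 div 2) + (1 - m 0 mod 2)) div 2 = m 0 div 2" by simp
      moreover have "(2 * (m 0 div 2) + (1 - m 0 mod 2)) mod 2 = 1 - m 0 mod 2" by (cases "m 0 mod 2 = 0") auto
      ultimately show ?thesis using True d r phiv_0[OF d] by simp
    next
      case False
      then show ?thesis using True by (simp add: phiv_l)
    qed
  qed
qed

lemma cpt_phiv: "0 < d \<Longrightarrow> cpt d (Suc j) (phiv d m) = flipd j (cpt d (Suc j) m)"
proof -
  assume d: "0 < d"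
  let ?p = "\<lambda>l. m l div 2" and ?\<sigma> = "\<lambda>l\<in>{..<d}. m l mod 2"
  have s: "?\<sigma> \<in> PiE {..<d} (\<lambda>_. {0, 1})" by (auto simp: restrict_PiE_iff)
  have "cpt d (Suc j) (phiv d m) = cpt d (Suc j) (\<lambda>l. 2 * ?p l + flips ?\<sigma> l)"
    by (rule cpt_cong) (simp add: phiv_def)
  also have "\<dots> = flipd j (cpt d (Suc j) (\<lambda>l. 2 * ?p l + ?\<sigma> l))" by (rule child_flip[OF d s])
  also have "cpt d (Suc j) (\<lambda>l. 2 * ?p l + ?\<sigma> l) = cpt d (Suc j) m"
    by (rule cpt_cong) simp
  finally show ?thesis .
qed

lemma main:
  fixes n mD :: "nat \<Rightarrow> nat"
  assumes d: "0 < d" and s: "1 \<le> s" and n: "\<forall>l<d. n l < 2 ^ (2 * ms s + 1)"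
    and sub: "cube d (ms s) mD \<subseteq> Ftil d \<pi> (s - 1)"
  shows "(LINT g : Fpi d \<pi> s \<inter> cube d (ms s) mD | mu d. Wv d n g) = (1/2) ^ s * qint d (tauE d (Finf d \<pi>)) (ms s) mD n"
proof -
  define a where "a = ms s"
  define D where "D = cube d a mD"
  define F where "F = Fpi d \<pi> s"
  define W where "W = Wv d n"
  define k where "k = (LEAST k. a \<le> k \<and> (\<forall>l<d. n l < 2 ^ k))"
  have kP: "a \<le> k \<and> (\<forall>l<d. n l < 2 ^ k)" unfolding k_def
    by (rule LeastI[of _ "Suc (2*a)"]) (use n in \<open>simp add: a_def\<close>)
  have kle: "k \<le> Suc (2*a)" unfolding k_def
    by (rule Least_le) (use n in \<open>simp add: a_def\<close>)
  have ak: "a \<le> k" and nk: "\<forall>l<d. n l < 2^k" using kP by auto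
  have detD: "g \<in> D \<longleftrightarrow> h \<in> D" if "g \<in> Gd d" "h \<in> Gd d" "agree d a g h" for g h
    using cube_agree2[of g d a mD h] cube_agree2[of h d a mD g] that unfolding D_def by auto
  have detF: "g \<in> F \<longleftrightarrow> h \<in> F" if "g \<in> Gd d" "h \<in> Gd d" "agree d (Suc (2 * a)) g h" for g h
    using Fpi_det[OF that[unfolded a_def]] unfolding F_def .
  have DF: "c \<in> Fpi d \<pi> t" if "c \<in> D" "1 \<le> t" "t < s" for c t
    using that sub unfolding D_def a_def Ftil_def by auto
  have Jk: "J k = (if k = Suc (2*a) then s else s - 1)"
  proof -
    have "{t. 1 \<le> t \<and> 2 * ms t < k} = (if k = Suc (2*a) then {1..s} else {1..<s})"
    proof (intro set_eqI iffI)
      fix t assume t: "t \<in> {t. 1 \<le> t \<and> 2 * ms t < k}"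
      have "t \<le> s"
      proof (rule ccontr)
        assume "\<not> t \<le> s"
        then have "2 * a + 1 < ms t" using ms_gap[OF s, of t] by (simp add: a_def)
        then show False using t kle by simp
      qed
      moreover have "t = s \<Longrightarrow> k = Suc (2 * a)" using t kle by (simp add: a_def)
      ultimately show "t \<in> (if k = Suc (2*a) then {1..s} else {1..<s})"
      proof (cases "k = Suc (2*a)")
        case True then show ?thesis using t \<open>t \<le> s\<close> by simp
      next
        case False
        then have "t \<noteq> s" using \<open>t = s \<Longrightarrow> k = Suc (2 * a)\<close> by blast
        then have "t < s" using \<open>t \<le> s\<close> by simp
        then show ?thesis using t False by simp
      qed
    next
      fix t assume t: "t \<in> (if k = Suc (2*a) then {1..s} else {1..<s})"
      then have t1: "1 \<le> t" and ts: "t \<le> s" by (auto split: if_splits)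
      show "t \<in> {t. 1 \<le> t \<and> 2 * ms t < k}"
      proof (cases "t = s")
        case True then show ?thesis using t by (auto simp: a_def split: if_splits)
      next
        case False
        then have "2 * ms t + 1 < a" using ms_gap[OF t1, of s] ts by (simp add: a_def)
        then show ?thesis using t1 ak by simp
      qed
    qed
    then show ?thesis unfolding J_def by simp
  qed
  have meet: "cube d k m' \<inter> Finf d \<pi> \<noteq> {} \<longleftrightarrow> (k = Suc (2*a) \<longrightarrow> cpt d k m' \<in> F)"
    if c: "cpt d k m' \<in> D" for m'
  proof -
    have "cube d k m' \<inter> Finf d \<pi> \<noteq> {} \<longleftrightarrow> (\<forall>t. 1 \<le> t \<and> 2 * ms t < k \<longrightarrow> cpt d k m' \<in> Fpi d \<pi> t)"
      by (rule meets_iff[OF d])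
    also have "\<dots> \<longleftrightarrow> (k = Suc (2*a) \<longrightarrow> cpt d k m' \<in> F)"
    proof (intro iffI impI allI)
      assume H: "\<forall>t. 1 \<le> t \<and> 2 * ms t < k \<longrightarrow> cpt d k m' \<in> Fpi d \<pi> t" and kk: "k = Suc (2 * a)"
      then show "cpt d k m' \<in> F" using s unfolding F_def a_def by simp
    next
      fix t assume H: "k = Suc (2 * a) \<longrightarrow> cpt d k m' \<in> F" and t: "1 \<le> t \<and> 2 * ms t < k"
      show "cpt d k m' \<in> Fpi d \<pi> t"
      proof (cases "t < s")
        case True then show ?thesis using DF[OF c] t by simp
      next
        case False
        show ?thesis
        proof (cases "t = s")
          case True
          then have "k = Suc (2 * a)" using t kle by (simp add: a_def)
          then show ?thesis using H True unfolding F_def by simp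
        next
          case False
          then have "2 * a + 1 < ms t" using ms_gap[OF s, of t] \<open>\<not> t < s\<close> by (simp add: a_def)
          then show ?thesis using t kle by simp
        qed
      qed
    qed
    finally show ?thesis .
  qed
  define Sk where "Sk = (\<lambda>g. indicator D g * (if k = Suc (2*a) then indicator F g else 1) * W g :: real)"
  have INTSk: "integral\<^sup>L (mu d) Sk = (1/2)^(d*k) * (\<Sum>m\<in>vecs d k. Sk (cpt d k m))"
  proof (rule INT, intro ballI impI)
    fix g h assume g: "g \<in> Gd d" and h: "h \<in> Gd d" and ag: "agree d k g h"
    have "g \<in> D \<longleftrightarrow> h \<in> D" using detD[OF g h] ag ak by auto
    moreover have "k = Suc (2*a) \<Longrightarrow> g \<in> F \<longleftrightarrow> h \<in> F" using detF[OF g h] ag by auto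
    moreover have "W g = W h" unfolding W_def using Wv_det[OF nk ag] .
    ultimately show "Sk g = Sk h" unfolding Sk_def by (simp add: indicator_def)
  qed
  have q: "qint d (tauE d (Finf d \<pi>)) a mD n = 2^(J k) * integral\<^sup>L (mu d) Sk"
  proof -
    have "qint d (tauE d (Finf d \<pi>)) a mD n =
        (\<Sum>m' \<in> {m' \<in> vecs d k. cube d k m' \<subseteq> cube d a mD}. Wk d k n m' * tauE d (Finf d \<pi>) k m')"
      unfolding qint_def Let_def k_def by (rule refl)
    also have "\<dots> = (\<Sum>m' \<in> vecs d k. if cube d k m' \<subseteq> D then Wk d k n m' * tauE d (Finf d \<pi>) k m' else 0)"
      unfolding D_def by (rule sum.inter_filter[OF vecs_finite])
    also have "\<dots> = (\<Sum>m' \<in> vecs d k. 2^(J k) / 2^(d*k) * Sk (cpt d k m'))"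
    proof (rule sum.cong[OF refl])
      fix m' assume m': "m' \<in> vecs d k"
      show "(if cube d k m' \<subseteq> D then Wk d k n m' * tauE d (Finf d \<pi>) k m' else 0) = 2^(J k) / 2^(d*k) * Sk (cpt d k m')"
      proof (cases "cpt d k m' \<in> D")
        case False
        then have "\<not> cube d k m' \<subseteq> D" using cpt_cube by blast
        then show ?thesis using False by (simp add: Sk_def)
      next
        case True
        then have "cube d k m' \<subseteq> D" using cube_sub_iff[OF ak] unfolding D_def by blast
        note sD = this
        have tf: "tauE d (Finf d \<pi>) k m' = (if cube d k m' \<inter> Finf d \<pi> = {} then 0 else 2^(J k) / 2^(d*k))"
          by (rule tau_formula[OF d])
        show ?thesis
        proof (cases "cube d k m' \<inter> Finf d \<pi> = {}")
          case E: True
          have kk: "k = Suc (2*a)" and nF: "cpt d k m' \<notin> F" using meet[OF True] E by auto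
          have "Sk (cpt d k m') = 0" unfolding Sk_def using nF kk by simp
          then show ?thesis using tf E sD by simp
        next
          case NE: False
          have kF: "k = Suc (2*a) \<longrightarrow> cpt d k m' \<in> F" using meet[OF True] NE by simp
          have "Sk (cpt d k m') = W (cpt d k m')" unfolding Sk_def using kF True by (cases "k = Suc (2*a)") simp_all
          then show ?thesis using tf NE sD by (simp add: Wk_def W_def)
        qed
      qed
    qed
    also have "\<dots> = 2^(J k) * ((1/2)^(d*k) * (\<Sum>m\<in>vecs d k. Sk (cpt d k m)))"
      by (simp add: sum_distrib_left power_one_over)
    finally show ?thesis using INTSk by simp
  qed
  have lhs: "(LINT g : F \<inter> D | mu d. W g) = integral\<^sup>L (mu d) (\<lambda>g. indicator (F \<inter> D) g * W g)"
    by (simp add: set_lebesgue_integral_def)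
  show ?thesis
  proof (cases "k = Suc (2*a)")
    case True
    have "Sk = (\<lambda>g. indicator (F \<inter> D) g * W g)"
      unfolding Sk_def using True by (auto simp: indicator_def fun_eq_iff)
    then show ?thesis using q lhs True Jk unfolding a_def D_def F_def W_def
      by (simp add: power_one_over)
  next
    case False
    then have k2: "k \<le> 2 * a" using kle by simp
    have Sk0: "Sk = (\<lambda>g. indicator D g * W g)" unfolding Sk_def using False by simp
    let ?K = "Suc (2 * a)"
    have n2: "\<forall>l<d. n l < 2^(2*a)"
    proof (intro allI impI)
      fix l assume "l < d"
      then have "n l < 2^k" using nk by simp
      also have "(2::nat)^k \<le> 2^(2*a)" using k2 by simp
      finally show "n l < 2^(2*a)" .
    qed
    have I1: "integral\<^sup>L (mu d) (\<lambda>g. indicator (F \<inter> D) g * W g) = (1/2)^(d * ?K) * (\<Sum>m\<in>vecs d ?K. indicator (F \<inter> D) (cpt d ?K m) * W (cpt d ?K m))"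
    proof (rule INT, intro ballI impI)
      fix g h assume g: "g \<in> Gd d" and h: "h \<in> Gd d" and ag: "agree d ?K g h"
      have "g \<in> D \<longleftrightarrow> h \<in> D" using detD[OF g h] ag by auto
      moreover have "g \<in> F \<longleftrightarrow> h \<in> F" using detF[OF g h] ag by auto
      moreover have "W g = W h" unfolding W_def using Wv_det[of d n ?K g h] n ag by (simp add: a_def)
      ultimately show "indicator (F \<inter> D) g * W g = indicator (F \<inter> D) h * W h" by (simp add: indicator_def)
    qed
    have I0: "integral\<^sup>L (mu d) (\<lambda>g. indicator D g * W g) = (1/2)^(d * ?K) * (\<Sum>m\<in>vecs d ?K. indicator D (cpt d ?K m) * W (cpt d ?K m))"
    proof (rule INT, intro ballI impI)
      fix g h assume g: "g \<in> Gd d" and h: "h \<in> Gd d" and ag: "agree d ?K g h"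
      have "g \<in> D \<longleftrightarrow> h \<in> D" using detD[OF g h] ag by auto
      moreover have "W g = W h" unfolding W_def using Wv_det[of d n ?K g h] n ag by (simp add: a_def)
      ultimately show "indicator D g * W g = indicator D h * W h" by (simp add: indicator_def)
    qed
    have hs: "2 * (\<Sum>m\<in>vecs d ?K. if cpt d ?K m \<in> F then indicator D (cpt d ?K m) * W (cpt d ?K m) else 0)
        = (\<Sum>m\<in>vecs d ?K. indicator D (cpt d ?K m) * W (cpt d ?K m))"
    proof (rule half_sum[where \<phi>="phiv d"])
      show "finite (vecs d ?K)" by (rule vecs_finite)
    next
      fix m assume m: "m \<in> vecs d ?K"
      show "phiv d m \<in> vecs d ?K \<and> phiv d (phiv d m) = m" using phiv_vecs[OF d m] phiv_inv[OF d m] by simp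
      have cp: "cpt d ?K (phiv d m) = flipd (2*a) (cpt d ?K m)" by (rule cpt_phiv[OF d])
      show "cpt d ?K (phiv d m) \<in> F \<longleftrightarrow> cpt d ?K m \<notin> F"
      proof -
        have "flipd (2 * ms s) (cpt d ?K m) \<in> Fpi d \<pi> s \<longleftrightarrow> cpt d ?K m \<notin> Fpi d \<pi> s"
          by (rule Fpi_toggle[OF d cpt_Gd])
        then show ?thesis using cp unfolding F_def a_def by simp
      qed
      have G1: "flipd (2*a) (cpt d ?K m) \<in> Gd d" by (rule flipd_Gd[OF d cpt_Gd])
      have "flipd (2*a) (cpt d ?K m) \<in> D \<longleftrightarrow> cpt d ?K m \<in> D"
        by (rule detD[OF G1 cpt_Gd]) (simp add: flipd_app)
      moreover have "W (flipd (2*a) (cpt d ?K m)) = W (cpt d ?K m)"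
        unfolding W_def by (rule Wv_det[OF n2]) (simp add: flipd_app)
      ultimately show "indicator D (cpt d ?K (phiv d m)) * W (cpt d ?K (phiv d m)) = indicator D (cpt d ?K m) * W (cpt d ?K m)"
        unfolding cp by (simp add: indicator_def)
    qed
    have "(\<Sum>m\<in>vecs d ?K. indicator (F \<inter> D) (cpt d ?K m) * W (cpt d ?K m))
        = (\<Sum>m\<in>vecs d ?K. if cpt d ?K m \<in> F then indicator D (cpt d ?K m) * W (cpt d ?K m) else 0)"
      by (rule sum.cong) (auto simp: indicator_def)
    then have half: "integral\<^sup>L (mu d) (\<lambda>g. indicator (F \<inter> D) g * W g) = integral\<^sup>L (mu d) (\<lambda>g. indicator D g * W g) / 2"
      using I1 I0 hs by simp
    have pw: "(1/2::real)^s * 2^(s-1) = 1/2"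
    proof -
      obtain s' where "s = Suc s'" using s by (cases s) auto
      then show ?thesis by (simp add: power_one_over)
    qed
    have "(1/2::real) ^ s * qint d (tauE d (Finf d \<pi>)) a mD n = (1/2)^s * 2^(s-1) * integral\<^sup>L (mu d) (\<lambda>g. indicator D g * W g)"
      using q Jk False Sk0 by simp
    also have "\<dots> = integral\<^sup>L (mu d) (\<lambda>g. indicator D g * W g) / 2" using pw by simp
    finally show ?thesis using lhs half unfolding a_def D_def F_def W_def by simp
  qed
qed


theorem lemma5:
  fixes d s :: nat and n mD :: "nat \<Rightarrow> nat"
    and \<pi> :: "nat \<Rightarrow> (nat \<Rightarrow> nat) \<Rightarrow> (nat \<Rightarrow> nat)"
  assumes "d \<ge> 2" and "s \<ge> 1"
    and "\<forall>l<d. n l < 2 ^ (2 * ms s + 1)"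
    and "\<forall>l<d. mD l < 2 ^ ms s"
    and "\<forall>t\<ge>1. bij_betw (\<pi> t) (vecs d (ms t)) (vecs d (ms t))"
  shows "(cube d (ms s) mD \<subseteq> Ftil d (\<lambda>_. id) (s - 1) \<longrightarrow>
           (LINT g : Fpi d (\<lambda>_. id) s \<inter> cube d (ms s) mD | mu d. Wv d n g)
             = (1/2) ^ s * qint d (tauE d (Finf d (\<lambda>_. id))) (ms s) mD n)
       \<and> (cube d (ms s) mD \<subseteq> Ftil d \<pi> (s - 1) \<longrightarrow>
           (LINT g : Fpi d \<pi> s \<inter> cube d (ms s) mD | mu d. Wv d n g)
             = (1/2) ^ s * qint d (tauE d (Finf d \<pi>)) (ms s) mD n)"
proof -
  have d: "0 < d" using assms(1) by simp
  show ?thesis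
    using main[OF d assms(2) assms(3), of mD "\<lambda>_. id"] main[OF d assms(2) assms(3), of mD \<pi>] by blast
qed

end
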